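(* Let $M,N:\Sigma\to c(X)$ be multimeasures with $M\ll N$, and assume that $N$ satisfies the countable chain condition. Then for every $A\in\Sigma\setminus\mathcal N(M)$ there exists $B\in\Sigma\setminus\mathcal N(M)$ with $B\subseteq A$ such that $N\ll M$ on $\Sigma_B$, i.e. every $E\in\Sigma_B$ with $M(E)=\{0\}$ satisfies $N(E)=\{0\}$.
   Context: $(\Omega,\Sigma)$ is a measurable space and $X$ is a Hausdorff locally convex space with dual $X'$. $c(X)$ is the family of nonempty closed convex subsets of $X$; $s(x',C)=\sup\{\langle x',x\rangle:x\in C\}$. A multimeasure is a map $M:\Sigma\to c(X)$ such that for every $x'\in X'$ the set function $E\mapsto s(x',M(E))$ is a $\sigma$-finite countably additive measure with values in $(-\infty,+\infty]$. $\mathcal N(M)=\{E\in\Sigma:M(E)=\{0\}\}$. $M\ll N$ means $\mathcal N(N)\subseteq\mathcal N(M)$. $\Sigma_B=\{E\in\Sigma:E\subseteq B\}$. A multimeasure $N$ satisfies the countable chain condition (ccc) if every family of pairwise disjoint sets in $\Sigma\setminus\mathcal N(N)$ is at most countable. *)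

theory Defs
  imports "HOL-Analysis.Analysis"
begin

text \<open>Hausdorff locally convex (real) topological vector spaces (convexity of V written out,
  since the constant convex cannot be used inside a class specification).\<close>
class locally_convex_space = real_vector + t2_space +
  assumes add_continuous:
    "\<And>x y::'a. ((\<lambda>p. fst p + snd p) \<longlongrightarrow> x + y) (nhds x \<times>\<^sub>F nhds y)"
  assumes scaleR_continuous:
    "\<And>(c::real) (x::'a). ((\<lambda>p. fst p *\<^sub>R snd p) \<longlongrightarrow> c *\<^sub>R x) (nhds c \<times>\<^sub>F nhds x)"
  assumes convex_nhds_base:
    "\<And>U. open U \<Longrightarrow> 0 \<in> U \<Longrightarrow> \<exists>V. open V \<and> (\<forall>x\<in>V. \<forall>y\<in>V. \<forall>u\<ge>0. \<forall>v\<ge>0. u + v = 1 \<longrightarrow> u *\<^sub>R x + v *\<^sub>R y \<in> V) \<and> 0 \<in> V \<and> V \<subseteq> U"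

definition topdual :: "('a::locally_convex_space \<Rightarrow> real) set" where
  "topdual = {f. linear f \<and> continuous_on UNIV f}"

definition cc_sets :: "'a::locally_convex_space set set" where
  "cc_sets = {C. C \<noteq> {} \<and> closed C \<and> convex C}"

definition support_fun :: "('a \<Rightarrow> real) \<Rightarrow> 'a set \<Rightarrow> ereal" where
  "support_fun f C = (SUP x\<in>C. ereal (f x))"

definition ext_signed_measure :: "'b measure \<Rightarrow> ('b set \<Rightarrow> ereal) \<Rightarrow> bool" where
  "ext_signed_measure S \<mu> \<longleftrightarrow>
     (\<forall>E\<in>sets S. \<mu> E \<noteq> -\<infinity>) \<and> \<mu> {} = 0 \<and>
     (\<forall>F::nat \<Rightarrow> 'b set. range F \<subseteq> sets S \<longrightarrow> disjoint_family F \<longrightarrow>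
        (\<lambda>n. \<Sum>i<n. \<mu> (F i)) \<longlonglongrightarrow> \<mu> (\<Union>i. F i)) \<and>
     (\<exists>A::nat \<Rightarrow> 'b set. range A \<subseteq> sets S \<and> (\<Union>i. A i) = space S \<and>
        (\<forall>i. \<bar>\<mu> (A i)\<bar> \<noteq> \<infinity>))"

definition multimeasure :: "'b measure \<Rightarrow> ('b set \<Rightarrow> 'a::locally_convex_space set) \<Rightarrow> bool" where
  "multimeasure S M \<longleftrightarrow> (\<forall>E\<in>sets S. M E \<in> cc_sets) \<and>
     (\<forall>f\<in>topdual. ext_signed_measure S (\<lambda>E. support_fun f (M E)))"

definition mm_null :: "'b measure \<Rightarrow> ('b set \<Rightarrow> 'a::zero set) \<Rightarrow> 'b set set" where
  "mm_null S M = {E \<in> sets S. M E = {0}}"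

definition mm_abs_cont :: "'b measure \<Rightarrow> ('b set \<Rightarrow> 'a::zero set) \<Rightarrow> ('b set \<Rightarrow> 'a set) \<Rightarrow> bool" where
  "mm_abs_cont S M N \<longleftrightarrow> mm_null S N \<subseteq> mm_null S M"

definition mm_ccc :: "'b measure \<Rightarrow> ('b set \<Rightarrow> 'a::zero set) \<Rightarrow> bool" where
  "mm_ccc S N \<longleftrightarrow> (\<forall>F. F \<subseteq> sets S - mm_null S N \<longrightarrow> disjoint F \<longrightarrow> countable F)"

end

theory Submission
  imports Defs
begin


lemma lc_add_tendsto:
  fixes x0 c :: "'a::locally_convex_space"
  shows "((\<lambda>x. x + c) \<longlongrightarrow> x0 + c) (nhds x0)"
proof -
  have "LIM x (nhds x0). (x, c) :> nhds x0 \<times>\<^sub>F nhds c"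
    by (rule filterlim_Pair) (auto simp: filterlim_ident)
  from filterlim_compose[OF add_continuous this] show ?thesis by simp
qed

lemma lc_scale_tendsto:
  fixes x0 :: "'a::locally_convex_space"
  shows "((\<lambda>x. r *\<^sub>R x) \<longlongrightarrow> r *\<^sub>R x0) (nhds x0)"
proof -
  have "LIM x (nhds x0). (r, x) :> nhds r \<times>\<^sub>F nhds x0"
    by (rule filterlim_Pair) (auto simp: filterlim_ident)
  from filterlim_compose[OF scaleR_continuous this] show ?thesis by simp
qed

lemma lc_scale_tendsto2:
  fixes x :: "'a::locally_convex_space"
  shows "((\<lambda>s. s *\<^sub>R x) \<longlongrightarrow> s0 *\<^sub>R x) (nhds s0)"
proof -
  have "LIM s (nhds s0). (s, x) :> nhds s0 \<times>\<^sub>F nhds x"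
    by (rule filterlim_Pair) (auto simp: filterlim_ident)
  from filterlim_compose[OF scaleR_continuous this] show ?thesis by simp
qed

lemma lc_absorbing:
  fixes V :: "'a::locally_convex_space set"
  assumes "open V" "0 \<in> V"
  shows "\<exists>t>0. (1/t) *\<^sub>R x \<in> V"
proof -
  have "eventually (\<lambda>s. s *\<^sub>R x \<in> V) (nhds 0)"
    using lc_scale_tendsto2[of x 0] assms by (simp add: tendsto_def)
  hence "eventually (\<lambda>s. s *\<^sub>R x \<in> V) (at_right (0::real))"
    by (simp add: eventually_at_filter eventually_mono)
  then obtain b where b: "b > 0" "\<forall>s>0. s < b \<longrightarrow> s *\<^sub>R x \<in> V"
    by (auto simp: eventually_at_right[of 0 1])
  hence "(b/2) *\<^sub>R x \<in> V" by auto
  moreover have "1 / (2/b) = b/2" by simp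
  ultimately show ?thesis using b(1) by (intro exI[of _ "2/b"]) auto
qed

lemma lc_continuous_linear:
  fixes f :: "'a::locally_convex_space \<Rightarrow> real"
  assumes lin: "linear f" and V: "open V" "0 \<in> V" and bd: "\<And>x. x \<in> V \<Longrightarrow> f x \<le> 1"
  shows "continuous_on UNIV f"
proof -
  have "isCont f x0" for x0
  proof -
    have "(f \<longlongrightarrow> f x0) (nhds x0)"
    proof (rule tendstoI)
      fix e :: real assume e: "e > 0"
      define h where "h r x = r *\<^sub>R (x - x0)" for r and x :: 'a
      have th: "((h r) \<longlongrightarrow> 0) (nhds x0)" for r
      proof -
        have "((\<lambda>x. x - x0) \<longlongrightarrow> 0) (nhds x0)"
          using lc_add_tendsto[of "-x0" x0] by simp
        from filterlim_compose[OF lc_scale_tendsto[of r 0] this]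
        show ?thesis by (simp add: h_def[abs_def])
      qed
      have "eventually (\<lambda>x. h (2/e) x \<in> V) (nhds x0)"
        using th[of "2/e"] V by (simp add: tendsto_def)
      moreover have "eventually (\<lambda>x. h (-2/e) x \<in> V) (nhds x0)"
        using th[of "-2/e"] V by (simp add: tendsto_def)
      ultimately show "eventually (\<lambda>x. dist (f x) (f x0) < e) (nhds x0)"
      proof eventually_elim
        case (elim x)
        have "f (h r x) = r * (f x - f x0)" for r
          using lin by (simp add: h_def linear_scale linear_diff)
        then have "(2/e) * (f x - f x0) \<le> 1" "(-2/e) * (f x - f x0) \<le> 1"
          using bd elim by metis+
        then have "f x - f x0 \<le> e/2" "-(f x - f x0) \<le> e/2" using e
          by (simp_all add: field_simps)
        then show ?case using e by (simp add: dist_real_def)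
      qed
    qed
    then have "(f \<longlongrightarrow> f x0) (at x0)"
      by (rule tendsto_mono[rotated]) (simp add: at_within_def)
    then show ?thesis by (simp add: continuous_at)
  qed
  then show ?thesis by (simp add: continuous_at_imp_continuous_on)
qed

definition dom_by :: "'a::real_vector set \<Rightarrow> 'a \<Rightarrow> real \<Rightarrow> bool" where
  "dom_by V x a \<longleftrightarrow> (\<forall>t>0. (1/t) *\<^sub>R x \<in> V \<longrightarrow> a \<le> t)"

definition good_graph :: "'a::real_vector set \<Rightarrow> 'a \<Rightarrow> ('a \<times> real) set \<Rightarrow> bool" where
  "good_graph V y G \<longleftrightarrow> subspace G \<and> (\<forall>x a b. (x,a)\<in>G \<longrightarrow> (x,b)\<in>G \<longrightarrow> a = b) \<and>
     (\<forall>x a. (x,a)\<in>G \<longrightarrow> dom_by V x a) \<and> (y,1) \<in> G"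

lemma good_scale:
  assumes "good_graph V y G" "(x,a) \<in> G"
  shows "(r *\<^sub>R x, r * a) \<in> G"
proof -
  have "r *\<^sub>R (x,a) \<in> G" using assms unfolding good_graph_def subspace_def by blast
  thus ?thesis by simp
qed

lemma good_add:
  assumes "good_graph V y G" "(x,a) \<in> G" "(x',a') \<in> G"
  shows "(x + x', a + a') \<in> G"
proof -
  have "(x,a) + (x',a') \<in> G" using assms unfolding good_graph_def subspace_def by blast
  thus ?thesis by simp
qed

lemma good_extend:
  fixes V :: "'a::real_vector set"
  assumes g: "good_graph V y G" and cV: "convex V" and ab: "\<And>x. \<exists>t>0. (1/t) *\<^sub>R x \<in> V"
    and z: "\<And>a. (z,a) \<notin> G"
  shows "\<exists>G'. good_graph V y G' \<and> G \<subseteq> G' \<and> G' \<noteq> G"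
proof -
  have sub: "subspace G" and fnc: "\<And>x a b. (x,a)\<in>G \<Longrightarrow> (x,b)\<in>G \<Longrightarrow> a = b"
    and dm: "\<And>x a. (x,a)\<in>G \<Longrightarrow> dom_by V x a" and y1: "(y,1) \<in> G"
    using g unfolding good_graph_def by blast+
  have G0: "(0,0) \<in> G" using sub unfolding subspace_def by (simp add: zero_prod_def)
  define L where "L = {a - t | x a t. (x,a)\<in>G \<and> t>0 \<and> (1/t) *\<^sub>R (x - z) \<in> V}"
  define R where "R = {t - a | x a t. (x,a)\<in>G \<and> t>0 \<and> (1/t) *\<^sub>R (x + z) \<in> V}"
  have LR: "l \<le> r" if lL: "l \<in> L" and rR: "r \<in> R" for l r
  proof -
    obtain x a t where 1: "l = a - t" "(x,a)\<in>G" "t>0" "(1/t) *\<^sub>R (x - z) \<in> V"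
      using lL unfolding L_def by blast
    obtain x' a' t' where 2: "r = t' - a'" "(x',a')\<in>G" "t'>0" "(1/t') *\<^sub>R (x' + z) \<in> V"
      using rR unfolding R_def by blast
    have s: "(x + x', a + a') \<in> G" using good_add[OF g 1(2) 2(2)] .
    have "(t/(t+t')) *\<^sub>R ((1/t) *\<^sub>R (x - z)) + (t'/(t+t')) *\<^sub>R ((1/t') *\<^sub>R (x' + z)) \<in> V"
      by (rule convexD[OF cV 1(4) 2(4)]) (use 1(3) 2(3) in \<open>simp_all add: add_divide_distrib[symmetric]\<close>)
    moreover have "(t/(t+t')) *\<^sub>R ((1/t) *\<^sub>R (x - z)) + (t'/(t+t')) *\<^sub>R ((1/t') *\<^sub>R (x' + z))
        = (1/(t+t')) *\<^sub>R (x + x')"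
      using 1(3) 2(3) by (simp add: scaleR_add_right scaleR_diff_right algebra_simps)
    ultimately have "a + a' \<le> t + t'" using dm[OF s] 1(3) 2(3) unfolding dom_by_def by auto
    thus ?thesis using 1 2 by simp
  qed
  obtain t1 where t1: "t1 > 0" "(1/t1) *\<^sub>R (-z) \<in> V" using ab by blast
  obtain t2 where t2: "t2 > 0" "(1/t2) *\<^sub>R z \<in> V" using ab by blast
  have Lne: "0 - t1 \<in> L" unfolding L_def using G0 t1 by force
  have Rne: "t2 - 0 \<in> R" unfolding R_def using G0 t2 by force
  define c where "c = Sup L"
  have bdd: "bdd_above L" using LR Rne by (auto simp: bdd_above_def)
  have cL: "l \<le> c" if "l \<in> L" for l unfolding c_def using bdd that by (simp add: cSup_upper)
  have cR: "c \<le> r" if "r \<in> R" for r unfolding c_def using Lne LR that by (intro cSup_least) auto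
  define G' where "G' = {(x + s *\<^sub>R z, a + s * c) | x a s. (x,a)\<in>G}"
  have sub': "subspace G'"
    unfolding subspace_def
  proof (intro conjI ballI allI)
    show "0 \<in> G'" unfolding G'_def using G0 by (force simp: zero_prod_def)
  next
    fix p q assume "p \<in> G'" "q \<in> G'"
    then obtain x a s x' a' s' where "p = (x + s *\<^sub>R z, a + s * c)" "(x,a)\<in>G"
      "q = (x' + s' *\<^sub>R z, a' + s' * c)" "(x',a')\<in>G" unfolding G'_def by blast
    moreover have "(x + x', a + a') \<in> G" using good_add[OF g] calculation by blast
    ultimately show "p + q \<in> G'" unfolding G'_def
      by (intro CollectI exI[of _ "x + x'"] exI[of _ "a + a'"] exI[of _ "s + s'"])
         (auto simp: algebra_simps)
  next
    fix r p assume "p \<in> G'"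
    then obtain x a s where "p = (x + s *\<^sub>R z, a + s * c)" "(x,a)\<in>G" unfolding G'_def by blast
    moreover have "(r *\<^sub>R x, r * a) \<in> G" using good_scale[OF g] calculation by blast
    ultimately show "r *\<^sub>R p \<in> G'" unfolding G'_def
      by (intro CollectI exI[of _ "r *\<^sub>R x"] exI[of _ "r * a"] exI[of _ "r * s"])
         (auto simp: algebra_simps)
  qed
  have fnc': "a1 = a2" if w1: "(w,a1)\<in>G'" and w2: "(w,a2)\<in>G'" for w a1 a2
  proof -
    obtain x a s where A: "w = x + s *\<^sub>R z" "a1 = a + s * c" "(x,a)\<in>G"
      using w1 unfolding G'_def by blast
    obtain x' a' s' where B: "w = x' + s' *\<^sub>R z" "a2 = a' + s' * c" "(x',a')\<in>G"
      using w2 unfolding G'_def by blast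
    have ss: "s = s'"
    proof (rule ccontr)
      assume ne: "s \<noteq> s'"
      have "(x' + (-1) *\<^sub>R x, a' + (-1) * a) \<in> G"
        using good_add[OF g B(3) good_scale[OF g A(3)]] .
      hence "(x' - x, a' - a) \<in> G" by simp
      hence "((1/(s - s')) *\<^sub>R (x' - x), (1/(s-s')) * (a' - a)) \<in> G"
        by (rule good_scale[OF g])
      moreover have "(1/(s - s')) *\<^sub>R (x' - x) = z"
      proof -
        have "x' - x = (s - s') *\<^sub>R z" using A(1) B(1) by (simp add: algebra_simps)
        thus ?thesis using ne by simp
      qed
      ultimately show False using z by simp
    qed
    hence "x = x'" using A(1) B(1) by simp
    hence "a = a'" using fnc A(3) B(3) by blast
    thus ?thesis using A B ss by simp
  qed
  have dm': "dom_by V w b" if wb: "(w,b)\<in>G'" for w b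
  proof -
    obtain x a s where A: "w = x + s *\<^sub>R z" "b = a + s * c" "(x,a)\<in>G"
      using wb unfolding G'_def by blast
    show ?thesis unfolding dom_by_def
    proof (intro allI impI)
      fix t :: real assume t: "t > 0" and tw: "(1/t) *\<^sub>R w \<in> V"
      consider "s > 0" | "s < 0" | "s = 0" by linarith
      then show "b \<le> t"
      proof cases
        case 1
        have G1: "((1/s) *\<^sub>R x, (1/s) * a) \<in> G" using good_scale[OF g A(3)] .
        have "(1/(t/s)) *\<^sub>R ((1/s) *\<^sub>R x + z) = (1/t) *\<^sub>R w"
          using 1 t A(1) by (simp add: scaleR_add_right)
        hence "t/s - (1/s) * a \<in> R" unfolding R_def using G1 1 t tw
          by (intro CollectI exI[of _ "(1/s) *\<^sub>R x"] exI[of _ "(1/s) * a"] exI[of _ "t/s"]) auto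
        hence "c \<le> t/s - (1/s) * a" by (rule cR)
        hence "s * c \<le> s * (t/s - (1/s) * a)" using 1 by (simp add: mult_left_mono)
        moreover have "s * (t/s - (1/s) * a) = t - a" using 1 by (simp add: field_simps)
        ultimately show ?thesis using A(2) by (simp add: algebra_simps)
      next
        case 2
        define r where "r = - s"
        have r: "r > 0" using 2 r_def by simp
        have G1: "((1/r) *\<^sub>R x, (1/r) * a) \<in> G" using good_scale[OF g A(3)] .
        have "(1/(t/r)) *\<^sub>R ((1/r) *\<^sub>R x - z) = (1/t) *\<^sub>R w"
          using r t A(1) by (simp add: r_def scaleR_diff_right scaleR_add_right)
        hence "(1/r) * a - t/r \<in> L" unfolding L_def using G1 r t tw
          by (intro CollectI exI[of _ "(1/r) *\<^sub>R x"] exI[of _ "(1/r) * a"] exI[of _ "t/r"]) auto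
        hence "(1/r) * a - t/r \<le> c" by (rule cL)
        hence "r * ((1/r) * a - t/r) \<le> r * c" using r by (simp add: mult_left_mono)
        moreover have "r * ((1/r) * a - t/r) = a - t" using r by (simp add: field_simps)
        ultimately show ?thesis using A(2) by (simp add: algebra_simps r_def)
      next
        case 3
        then show ?thesis using dm[OF A(3)] A t tw unfolding dom_by_def by auto
      qed
    qed
  qed
  have GG': "G \<subseteq> G'" unfolding G'_def by force
  have "(z, c) \<in> G'" unfolding G'_def using G0
    by (intro CollectI exI[of _ 0] exI[of _ "0::real"] exI[of _ "1::real"]) auto
  hence "G' \<noteq> G" using z by blast
  moreover have "good_graph V y G'" unfolding good_graph_def
    using sub' fnc' dm' y1 GG' by blast
  ultimately show ?thesis using GG' by blast
qed

lemma hb_exists: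
  fixes V :: "'a::real_vector set"
  assumes cV: "convex V" and V0: "0 \<in> V" and ab: "\<And>x. \<exists>t>0. (1/t) *\<^sub>R x \<in> V"
    and yV: "y \<notin> V"
  shows "\<exists>f. linear f \<and> (\<forall>x. dom_by V x (f x)) \<and> f y = 1"
proof -
  define A where "A = {G. good_graph V y G}"
  define G0 where "G0 = range (\<lambda>r::real. (r *\<^sub>R y, r))"
  have y0: "y \<noteq> 0" using V0 yV by auto
  have "good_graph V y G0" unfolding good_graph_def
  proof (intro conjI allI impI)
    show "subspace G0" unfolding subspace_def G0_def
    proof (intro conjI ballI allI)
      show "0 \<in> range (\<lambda>r::real. (r *\<^sub>R y, r))"
        by (rule image_eqI[of _ _ 0]) (auto simp: zero_prod_def)
    next
      fix p q assume "p \<in> range (\<lambda>r::real. (r *\<^sub>R y, r))" "q \<in> range (\<lambda>r::real. (r *\<^sub>R y, r))"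
      then obtain r r' where "p = (r *\<^sub>R y, r)" "q = (r' *\<^sub>R y, r')" by blast
      thus "p + q \<in> range (\<lambda>r::real. (r *\<^sub>R y, r))"
        by (intro image_eqI[of _ _ "r + r'"]) (auto simp: scaleR_add_left)
    next
      fix c p assume "p \<in> range (\<lambda>r::real. (r *\<^sub>R y, r))"
      then obtain r where "p = (r *\<^sub>R y, r)" by blast
      thus "c *\<^sub>R p \<in> range (\<lambda>r::real. (r *\<^sub>R y, r))"
        by (intro image_eqI[of _ _ "c * r"]) auto
    qed
  next
    fix x a b assume "(x, a) \<in> G0" "(x, b) \<in> G0"
    thus "a = b" using y0 unfolding G0_def by (simp add: image_iff)
  next
    fix x a assume "(x, a) \<in> G0"
    hence x: "x = a *\<^sub>R y" unfolding G0_def by (simp add: image_iff)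
    show "dom_by V x a" unfolding dom_by_def
    proof (intro allI impI)
      fix t :: real assume t: "t > 0" and tx: "(1/t) *\<^sub>R x \<in> V"
      show "a \<le> t"
      proof (rule ccontr)
        assume "\<not> a \<le> t"
        hence at: "a > t" by simp
        hence a0: "a > 0" using t by simp
        have "(t/a) *\<^sub>R ((1/t) *\<^sub>R x) + (1 - t/a) *\<^sub>R 0 \<in> V"
          by (rule convexD[OF cV tx V0]) (use at t a0 in auto)
        moreover have "(t/a) *\<^sub>R ((1/t) *\<^sub>R x) + (1 - t/a) *\<^sub>R 0 = y"
          using x t a0 by simp
        ultimately show False using yV by simp
      qed
    qed
  next
    show "(y, 1) \<in> G0" unfolding G0_def by (rule image_eqI[of _ _ 1]) auto
  qed
  hence G0A: "G0 \<in> A" unfolding A_def by simp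
  have "\<exists>U\<in>A. \<forall>X\<in>C. X \<subseteq> U" if C: "C \<in> chains A" for C
  proof (cases "C = {}")
    case True thus ?thesis using G0A by blast
  next
    case False
    have CA: "\<And>G. G \<in> C \<Longrightarrow> good_graph V y G" using chainsD2[OF C] unfolding A_def by blast
    have cmp: "\<And>G H. G \<in> C \<Longrightarrow> H \<in> C \<Longrightarrow> G \<subseteq> H \<or> H \<subseteq> G" using chainsD[OF C] by blast
    obtain G1 where G1: "G1 \<in> C" using False by blast
    have CS: "\<And>G. G \<in> C \<Longrightarrow> subspace G" using CA unfolding good_graph_def by simp
    have CF: "\<And>G x a b. G \<in> C \<Longrightarrow> (x,a)\<in>G \<Longrightarrow> (x,b)\<in>G \<Longrightarrow> a = b"
      using CA unfolding good_graph_def by metis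
    have CD: "\<And>G x a. G \<in> C \<Longrightarrow> (x,a)\<in>G \<Longrightarrow> dom_by V x a"
      using CA unfolding good_graph_def by metis
    have CY: "\<And>G. G \<in> C \<Longrightarrow> (y,1) \<in> G"
      using CA unfolding good_graph_def by metis
    have "good_graph V y (\<Union>C)" unfolding good_graph_def
    proof (intro conjI allI impI)
      show "subspace (\<Union>C)" unfolding subspace_def
      proof (intro conjI ballI allI)
        show "0 \<in> \<Union>C" using subspace_0[OF CS[OF G1]] G1 by (rule UnionI[rotated])
      next
        fix p q assume "p \<in> \<Union>C" "q \<in> \<Union>C"
        then obtain G H where GH: "G \<in> C" "H \<in> C" "p \<in> G" "q \<in> H" by (elim UnionE)
        from cmp[OF GH(1,2)] show "p + q \<in> \<Union>C"
        proof
          assume "G \<subseteq> H"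
          hence "p + q \<in> H" using subspace_add[OF CS[OF GH(2)]] GH(3,4) by blast
          thus ?thesis using GH(2) by (rule UnionI[rotated])
        next
          assume "H \<subseteq> G"
          hence "p + q \<in> G" using subspace_add[OF CS[OF GH(1)]] GH(3,4) by blast
          thus ?thesis using GH(1) by (rule UnionI[rotated])
        qed
      next
        fix c p assume "p \<in> \<Union>C"
        then obtain G where G: "G \<in> C" "p \<in> G" by (elim UnionE)
        have "c *\<^sub>R p \<in> G" using subspace_scale[OF CS[OF G(1)] G(2)] .
        thus "c *\<^sub>R p \<in> \<Union>C" using G(1) by (rule UnionI[rotated])
      qed
    next
      fix x a b assume "(x, a) \<in> \<Union>C" "(x, b) \<in> \<Union>C"
      then obtain G H where GH: "G \<in> C" "H \<in> C" "(x,a) \<in> G" "(x,b) \<in> H" by (elim UnionE)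
      from cmp[OF GH(1,2)] show "a = b"
      proof
        assume "G \<subseteq> H"
        thus ?thesis using CF[OF GH(2) _ GH(4)] GH(3) by blast
      next
        assume "H \<subseteq> G"
        thus ?thesis using CF[OF GH(1) GH(3)] GH(4) by blast
      qed
    next
      fix x a assume "(x, a) \<in> \<Union>C"
      then obtain G where "G \<in> C" "(x,a) \<in> G" by (elim UnionE)
      thus "dom_by V x a" by (rule CD)
    next
      show "(y, 1) \<in> \<Union>C" using CY[OF G1] G1 by (rule UnionI[rotated])
    qed
    hence "\<Union>C \<in> A" unfolding A_def by simp
    moreover have "\<forall>X\<in>C. X \<subseteq> \<Union>C" by (simp add: Union_upper)
    ultimately show ?thesis by (rule bexI[rotated])
  qed
  then obtain G where GA: "G \<in> A" and max: "\<And>X. X \<in> A \<Longrightarrow> G \<subseteq> X \<Longrightarrow> X = G"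
    using Zorn_Lemma2[of A] by (metis (no_types, lifting))
  have g: "good_graph V y G" using GA unfolding A_def by simp
  have tot: "\<exists>a. (z, a) \<in> G" for z
  proof (rule ccontr)
    assume "\<not> (\<exists>a. (z, a) \<in> G)"
    then obtain G' where "good_graph V y G'" "G \<subseteq> G'" "G' \<noteq> G"
      using good_extend[OF g cV ab] by blast
    thus False using max unfolding A_def by blast
  qed
  have fnc: "\<And>x a b. (x,a)\<in>G \<Longrightarrow> (x,b)\<in>G \<Longrightarrow> a = b" using g unfolding good_graph_def by blast
  define f where "f z = (THE a. (z, a) \<in> G)" for z
  have fG: "(z, f z) \<in> G" for z
  proof -
    obtain a where a: "(z, a) \<in> G" using tot by blast
    have "(THE a. (z, a) \<in> G) = a" using a fnc by (intro the_equality) auto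
    thus ?thesis using a unfolding f_def by simp
  qed
  have fu: "f z = a" if "(z, a) \<in> G" for z a using fnc[OF fG that] .
  have "linear f"
  proof (rule linearI)
    fix b1 b2 show "f (b1 + b2) = f b1 + f b2" using fu[OF good_add[OF g fG fG]] .
  next
    fix r b show "f (r *\<^sub>R b) = r *\<^sub>R f b" using fu[OF good_scale[OF g fG]] by simp
  qed
  moreover have "\<forall>x. dom_by V x (f x)" using g fG unfolding good_graph_def by blast
  moreover have "(y, 1) \<in> G" using g unfolding good_graph_def by blast
  hence "f y = 1" by (rule fu)
  ultimately show ?thesis by blast
qed

lemma dual_separates:
  fixes y :: "'a::locally_convex_space"
  assumes "y \<noteq> 0"
  shows "\<exists>f\<in>topdual. f y > 0"
proof -
  have o: "open (UNIV - {y})" by (simp add: open_delete)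
  have o0: "0 \<in> UNIV - {y}" using assms by simp
  from convex_nhds_base[OF o o0] obtain V where V: "open V" "\<forall>x\<in>V. \<forall>y\<in>V. \<forall>u\<ge>0. \<forall>v\<ge>0. u + v = 1 \<longrightarrow> u *\<^sub>R x + v *\<^sub>R y \<in> V"
    "0 \<in> V" "V \<subseteq> UNIV - {y}"
    by blast
  have cV: "convex V" unfolding convex_def by (rule V(2))
  have yV: "y \<notin> V" using V(4) by blast
  obtain f where f: "linear f" "\<forall>x. dom_by V x (f x)" "f y = 1"
    using hb_exists[OF cV V(3) lc_absorbing[OF V(1) V(3)] yV] by blast
  have "f x \<le> 1" if "x \<in> V" for x using f(2) that unfolding dom_by_def by (metis div_by_1 scaleR_one zero_less_one)
  hence "continuous_on UNIV f" using lc_continuous_linear[OF f(1) V(1) V(3)] by blast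
  hence "f \<in> topdual" using f(1) unfolding topdual_def by simp
  thus ?thesis using f(3) by (intro bexI[of _ f]) auto
qed


lemma support_fun_zero:
  assumes "f \<in> topdual" shows "support_fun f {0} = 0"
proof -
  have "linear f" using assms unfolding topdual_def by simp
  hence "f 0 = 0" by (rule linear_0)
  thus ?thesis unfolding support_fun_def by (simp add: zero_ereal_def)
qed

lemma cc_zero:
  fixes C :: "'a::locally_convex_space set"
  assumes "C \<in> cc_sets" and z: "\<And>f. f \<in> topdual \<Longrightarrow> support_fun f C = 0"
  shows "C = {0}"
proof -
  have ne: "C \<noteq> {}" using assms(1) unfolding cc_sets_def by simp
  have "y = 0" if y: "y \<in> C" for y
  proof (rule ccontr)
    assume "y \<noteq> 0"
    then obtain f where f: "f \<in> topdual" "f y > 0" using dual_separates by blast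
    have "ereal (f y) \<le> support_fun f C" unfolding support_fun_def using y by (rule SUP_upper)
    hence "ereal (f y) \<le> 0" using z[OF f(1)] by simp
    thus False using f(2) by simp
  qed
  thus ?thesis using ne by blast
qed

lemma mm_esm:
  assumes "multimeasure S M" "f \<in> topdual"
  shows "ext_signed_measure S (\<lambda>E. support_fun f (M E))"
  using assms unfolding multimeasure_def by blast

lemma mm_empty:
  fixes M :: "'b set \<Rightarrow> 'a::locally_convex_space set"
  assumes "multimeasure S M" shows "M {} = {0}"
proof (rule cc_zero)
  show "M {} \<in> cc_sets" using assms unfolding multimeasure_def by simp
next
  fix f :: "'a \<Rightarrow> real" assume "f \<in> topdual"
  from mm_esm[OF assms this] show "support_fun f (M {}) = 0" unfolding ext_signed_measure_def by simp
qed

lemma null_union: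
  fixes M :: "'b set \<Rightarrow> 'a::locally_convex_space set"
  assumes mm: "multimeasure S M" and cF: "countable F" and FN: "F \<subseteq> mm_null S M" and dF: "disjoint F"
  shows "\<Union>F \<in> mm_null S M"
proof -
  have Fs: "F \<subseteq> sets S" using FN unfolding mm_null_def by blast
  have Us: "\<Union>F \<in> sets S" using cF Fs by (rule sets.countable_Union)
  define G where "G n = (if n \<in> to_nat_on F ` F then from_nat_into F n else {})" for n
  have GF: "G n \<in> F \<or> G n = {}" for n
  proof (cases "n \<in> to_nat_on F ` F")
    case True
    then obtain e where "e \<in> F" "n = to_nat_on F e" by blast
    thus ?thesis unfolding G_def using from_nat_into_to_nat_on[OF cF] by simp
  qed (simp add: G_def)
  have Ge: "G (to_nat_on F e) = e" if "e \<in> F" for e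
    unfolding G_def using that from_nat_into_to_nat_on[OF cF that] by simp
  have rG: "range G \<subseteq> sets S"
  proof (intro image_subsetI)
    fix n show "G n \<in> sets S"
    proof (cases "G n = {}")
      case True thus ?thesis by simp
    next
      case False hence "G n \<in> F" using GF[of n] by simp
      thus ?thesis using Fs by (rule subsetD[rotated])
    qed
  qed
  have dG: "disjoint_family G" unfolding disjoint_family_on_def
  proof (intro ballI impI)
    fix m n :: nat assume mn: "m \<noteq> n"
    show "G m \<inter> G n = {}"
    proof (cases "m \<in> to_nat_on F ` F \<and> n \<in> to_nat_on F ` F")
      case True
      then obtain e1 e2 where e: "e1 \<in> F" "m = to_nat_on F e1" "e2 \<in> F" "n = to_nat_on F e2" by blast
      hence "e1 \<noteq> e2" using mn by blast
      moreover have "G m = e1" "G n = e2" using Ge e by auto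
      ultimately show ?thesis using dF e(1,3) by (intro disjointD[of F]) auto
    next
      case False thus ?thesis unfolding G_def by auto
    qed
  qed
  have UG: "(\<Union>i. G i) = \<Union>F"
  proof
    show "(\<Union>i. G i) \<subseteq> \<Union>F" using GF by blast
    show "\<Union>F \<subseteq> (\<Union>i. G i)"
    proof
      fix x assume "x \<in> \<Union>F"
      then obtain e where "e \<in> F" "x \<in> e" by blast
      thus "x \<in> (\<Union>i. G i)" using Ge[of e] by (intro UN_I[of "to_nat_on F e"]) auto
    qed
  qed
  have "M (\<Union>F) = {0}"
  proof (rule cc_zero)
    show "M (\<Union>F) \<in> cc_sets" using mm Us unfolding multimeasure_def by blast
  next
    fix f :: "'a \<Rightarrow> real" assume f: "f \<in> topdual"
    have esm: "ext_signed_measure S (\<lambda>E. support_fun f (M E))" using mm_esm[OF mm f] .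
    have z: "support_fun f (M (G n)) = 0" for n
    proof (cases "G n = {}")
      case True thus ?thesis using esm unfolding ext_signed_measure_def by simp
    next
      case False
      hence "G n \<in> F" using GF by blast
      hence "M (G n) = {0}" using FN unfolding mm_null_def by blast
      thus ?thesis using support_fun_zero[OF f] by simp
    qed
    have "(\<lambda>n. \<Sum>i<n. support_fun f (M (G i))) \<longlonglongrightarrow> support_fun f (M (\<Union>i. G i))"
    proof -
      have "\<forall>F::nat \<Rightarrow> 'b set. range F \<subseteq> sets S \<longrightarrow> disjoint_family F \<longrightarrow>
        (\<lambda>n. \<Sum>i<n. support_fun f (M (F i))) \<longlonglongrightarrow> support_fun f (M (\<Union>i. F i))"
        using esm unfolding ext_signed_measure_def by (elim conjE)
      thus ?thesis using rG dG by simp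
    qed
    hence "(\<lambda>n. 0::ereal) \<longlonglongrightarrow> support_fun f (M (\<Union>F))" using z UG by simp
    thus "support_fun f (M (\<Union>F)) = 0" using tendsto_const by (rule LIMSEQ_unique)
  qed
  thus ?thesis using Us unfolding mm_null_def by blast
qed

theorem lemma3p2:
  fixes S :: "'b measure" and M N :: "'b set \<Rightarrow> 'a::locally_convex_space set"
  assumes "multimeasure S M" and "multimeasure S N"
    and "mm_abs_cont S M N" and "mm_ccc S N"
    and "A \<in> sets S - mm_null S M"
  shows "\<exists>B \<in> sets S - mm_null S M. B \<subseteq> A \<and>
           (\<forall>E \<in> sets S. E \<subseteq> B \<longrightarrow> M E = {0} \<longrightarrow> N E = {0})"
proof (rule ccontr)
  assume nt: "\<not> ?thesis"
  have neg: "\<exists>E \<in> sets S. E \<subseteq> B \<and> M E = {0} \<and> N E \<noteq> {0}"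
    if B1: "B \<in> sets S - mm_null S M" and B2: "B \<subseteq> A" for B
  proof (rule ccontr)
    assume "\<not> (\<exists>E \<in> sets S. E \<subseteq> B \<and> M E = {0} \<and> N E \<noteq> {0})"
    hence "\<forall>E \<in> sets S. E \<subseteq> B \<longrightarrow> M E = {0} \<longrightarrow> N E = {0}" by blast
    hence "\<exists>B \<in> sets S - mm_null S M. B \<subseteq> A \<and>
           (\<forall>E \<in> sets S. E \<subseteq> B \<longrightarrow> M E = {0} \<longrightarrow> N E = {0})" using B1 B2 by blast
    thus False using nt by blast
  qed
  have As: "A \<in> sets S" and AM: "M A \<noteq> {0}" using assms(5) unfolding mm_null_def by simp_all
  define P where "P = {E \<in> sets S. E \<subseteq> A \<and> M E = {0} \<and> N E \<noteq> {0}}"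
  define Fam where "Fam = {D. D \<subseteq> P \<and> disjoint D}"
  have ch: "\<Union>C \<in> Fam" if C: "C \<in> chains Fam" for C
  proof -
    have CF: "\<And>D. D \<in> C \<Longrightarrow> D \<subseteq> P \<and> disjoint D" using chainsD2[OF C] unfolding Fam_def by blast
    have cmp: "\<And>D1 D2. D1 \<in> C \<Longrightarrow> D2 \<in> C \<Longrightarrow> D1 \<subseteq> D2 \<or> D2 \<subseteq> D1" using chainsD[OF C] by blast
    have "\<Union>C \<subseteq> P" using CF by blast
    moreover have "disjoint (\<Union>C)" unfolding disjoint_def
    proof (intro ballI impI)
      fix a b assume "a \<in> \<Union>C" "b \<in> \<Union>C" "a \<noteq> b"
      then obtain D1 D2 where D: "D1 \<in> C" "D2 \<in> C" "a \<in> D1" "b \<in> D2" by blast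
      from cmp[OF D(1,2)] show "a \<inter> b = {}"
      proof
        assume "D1 \<subseteq> D2"
        hence "a \<in> D2" using D(3) by blast
        moreover have "disjoint D2" using CF[OF D(2)] by blast
        ultimately show ?thesis using D(4) \<open>a \<noteq> b\<close> by (intro disjointD[of D2])
      next
        assume "D2 \<subseteq> D1"
        hence "b \<in> D1" using D(4) by blast
        moreover have "disjoint D1" using CF[OF D(1)] by blast
        ultimately show ?thesis using D(3) \<open>a \<noteq> b\<close> by (intro disjointD[of D1])
      qed
    qed
    ultimately show ?thesis unfolding Fam_def by blast
  qed
  have "\<exists>D\<in>Fam. \<forall>X\<in>Fam. D \<subseteq> X \<longrightarrow> X = D"
    by (rule Zorn_Lemma) (use ch in blast)
  then obtain D where DF: "D \<in> Fam" and max0: "\<forall>X\<in>Fam. D \<subseteq> X \<longrightarrow> X = D"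
    by (elim bexE)
  have max: "X = D" if "X \<in> Fam" "D \<subseteq> X" for X using max0 that by blast
  have DP: "D \<subseteq> P" and dD: "disjoint D" using DF unfolding Fam_def by auto
  have "D \<subseteq> sets S - mm_null S N"
  proof
    fix E assume "E \<in> D"
    hence "E \<in> P" using DP by blast
    thus "E \<in> sets S - mm_null S N" unfolding P_def mm_null_def by simp
  qed
  hence cD: "countable D" using mm_ccc_def[THEN iffD1, OF assms(4), rule_format, OF _ dD] by blast
  have DM: "D \<subseteq> mm_null S M"
  proof
    fix E assume "E \<in> D"
    hence "E \<in> P" using DP by blast
    thus "E \<in> mm_null S M" unfolding P_def mm_null_def by simp
  qed
  define E0 where "E0 = \<Union>D"
  have E0M: "E0 \<in> mm_null S M" unfolding E0_def by (rule null_union[OF assms(1) cD DM dD])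
  have E0s: "E0 \<in> sets S" using E0M unfolding mm_null_def by simp
  have E0A: "E0 \<subseteq> A" using DP unfolding E0_def P_def by auto
  define B where "B = A - E0"
  have Bs: "B \<in> sets S" unfolding B_def using As E0s by (rule sets.Diff)
  have BM: "M B = {0}"
  proof (rule ccontr)
    assume "M B \<noteq> {0}"
    hence "B \<in> sets S - mm_null S M" using Bs unfolding mm_null_def by blast
    moreover have "B \<subseteq> A" unfolding B_def by blast
    ultimately have "\<exists>E \<in> sets S. E \<subseteq> B \<and> M E = {0} \<and> N E \<noteq> {0}"
      by (rule neg)
    then obtain E where E: "E \<in> sets S" "E \<subseteq> B" "M E = {0}" "N E \<noteq> {0}" by blast
    have Ene: "E \<noteq> {}" using E(4) mm_empty[OF assms(2)] by auto
    have EP: "E \<in> P" using E unfolding P_def B_def by blast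
    have "disjoint (insert E D)" unfolding disjoint_def
    proof (intro ballI impI)
      fix a b assume ab: "a \<in> insert E D" "b \<in> insert E D" "a \<noteq> b"
      have Ed: "E \<inter> d = {}" if "d \<in> D" for d using E(2) that unfolding B_def E0_def by blast
      show "a \<inter> b = {}"
      proof (cases "a = E")
        case True
        hence "b \<in> D" using ab by blast
        thus ?thesis using Ed True by blast
      next
        case aE: False
        hence a: "a \<in> D" using ab by blast
        show ?thesis
        proof (cases "b = E")
          case True thus ?thesis using Ed[OF a] by blast
        next
          case False
          hence "b \<in> D" using ab by blast
          thus ?thesis using dD a ab(3) by (intro disjointD[of D])
        qed
      qed
    qed
    hence "insert E D \<in> Fam" using EP DP unfolding Fam_def by blast
    hence "insert E D = D" by (rule max) blast
    hence "E \<in> D" by blast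
    hence "E \<subseteq> E0" unfolding E0_def by blast
    thus False using E(2) Ene unfolding B_def by blast
  qed
  have "\<Union>{E0, B} \<in> mm_null S M"
  proof (rule null_union[OF assms(1)])
    show "countable {E0, B}" by simp
    show "{E0, B} \<subseteq> mm_null S M" using E0M Bs BM unfolding mm_null_def by blast
    show "disjoint {E0, B}" unfolding disjoint_def B_def by blast
  qed
  moreover have "\<Union>{E0, B} = A" using E0A unfolding B_def by blast
  ultimately show False using AM unfolding mm_null_def by blast
qed

end
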